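(* Let $\varphi$ be any forecasting system and $\omega\in\Omega$. Then $\omega$ is Schnorr random for $\varphi$ if and only if there is no recursive, positive, rational-valued test supermartingale $R$ for $\varphi$ and growth function $\rho$ with $\limsup_{n\to\infty}[R(\omega^n)-\rho(n)]>0$.
   Context: Notation: $\mathbb N_0=\{0,1,\dots\}$; $\Omega=\{0,1\}^{\mathbb N}$; $\mathbb S$ finite binary strings, $\square$ empty string, $\omega^n$ first $n$ entries of $\omega$. $\mathcal I$: nonempty closed subintervals of $[0,1]$; $\overline E_I(f)=\max_{p\in I}[pf(1)+(1-p)f(0)]$. Forecasting system: any $\varphi:\mathbb S\to\mathcal I$. Supermartingale for $\varphi$: $M:\mathbb S\to\mathbb R$ with $\overline E_{\varphi(s)}(M(s\,\cdot))\le M(s)$ for all $s$ ($M(s\,\cdot):x\mapsto M(sx)$); test supermartingale: non-negative with $M(\square)=1$. A real map $r:\mathbb S\to\mathbb R$ is computable if there is a recursive $q:\mathbb S\times\mathbb N_0\to\mathbb Q$ with $|r(s)-q(s,N)|\le2^{-N}$; a rational-valued process is recursive if it is a recursive map $\mathbb S\to\mathbb Q$. A growth function is a recursive, non-decreasing, unbounded $\rho:\mathbb N_0\to\mathbb N_0$. $\omega$ is Schnorr random for $\varphi$ if $\limsup_n[T(\omega^n)-\rho(n)]\le0$ for all computable test supermartingales $T$ for $\varphi$ and all growth functions $\rho$. *)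

theory Defs
  imports Complex_Main "HOL-Library.Extended_Real" "HOL-Library.Liminf_Limsup"
    "HOL-Library.Nat_Bijection"
begin

primrec prec :: "(nat list \<Rightarrow> nat) \<Rightarrow> (nat list \<Rightarrow> nat) \<Rightarrow> nat \<Rightarrow> nat list \<Rightarrow> nat" where
  "prec f g 0 xs = f xs"
| "prec f g (Suc k) xs = g (k # prec f g k xs # xs)"

definition prec_fn :: "(nat list \<Rightarrow> nat) \<Rightarrow> (nat list \<Rightarrow> nat) \<Rightarrow> nat list \<Rightarrow> nat" where
  "prec_fn f g xs = (case xs of [] \<Rightarrow> 0 | x # ys \<Rightarrow> prec f g x ys)"

inductive recfn :: "nat \<Rightarrow> (nat list \<Rightarrow> nat) \<Rightarrow> bool" where
  zero: "recfn n (\<lambda>_. 0)"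
| succ: "recfn 1 (\<lambda>xs. Suc (hd xs))"
| proj: "i < n \<Longrightarrow> recfn n (\<lambda>xs. xs ! i)"
| comp: "recfn m f \<Longrightarrow> length gs = m \<Longrightarrow> (\<forall>g\<in>set gs. recfn n g)
          \<Longrightarrow> recfn n (\<lambda>xs. f (map (\<lambda>g. g xs) gs))"
| prim_rec: "recfn n f \<Longrightarrow> recfn (Suc (Suc n)) g \<Longrightarrow> recfn (Suc n) (prec_fn f g)"
| minim: "recfn (Suc n) f \<Longrightarrow> (\<forall>xs. length xs = n \<longrightarrow> (\<exists>y. f (y # xs) = 0))
          \<Longrightarrow> recfn n (\<lambda>xs. LEAST y. f (y # xs) = 0)"

text \<open>Binary strings are bool lists; True = 1, False = 0. The string s followed by x is s @ [x].\<close>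
type_synonym bstr = "bool list"

primrec str_code :: "bstr \<Rightarrow> nat" where
  "str_code [] = 0"
| "str_code (b # s) = 2 * str_code s + (if b then 2 else 1)"

definition rat_decode :: "nat \<Rightarrow> rat" where
  "rat_decode n = (case prod_decode n of (a, b) \<Rightarrow> of_int (int_decode a) / of_nat (Suc b))"

definition recursive_nat_fun :: "(nat \<Rightarrow> nat) \<Rightarrow> bool" where
  "recursive_nat_fun \<rho> \<longleftrightarrow> (\<exists>g. recfn 1 g \<and> (\<forall>n. \<rho> n = g [n]))"

definition recursive_rat_process :: "(bstr \<Rightarrow> rat) \<Rightarrow> bool" where
  "recursive_rat_process q \<longleftrightarrow> (\<exists>g. recfn 1 g \<and> (\<forall>s. q s = rat_decode (g [str_code s])))"

definition recursive_rat_map2 :: "(bstr \<Rightarrow> nat \<Rightarrow> rat) \<Rightarrow> bool" where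
  "recursive_rat_map2 q \<longleftrightarrow>
     (\<exists>g. recfn 2 g \<and> (\<forall>s N. q s N = rat_decode (g [str_code s, N])))"

definition computable_real_map :: "(bstr \<Rightarrow> real) \<Rightarrow> bool" where
  "computable_real_map r \<longleftrightarrow>
     (\<exists>q. recursive_rat_map2 q \<and> (\<forall>s N. \<bar>r s - real_of_rat (q s N)\<bar> \<le> (1/2) ^ N))"

definition is_forecast_interval :: "real set \<Rightarrow> bool" where
  "is_forecast_interval I \<longleftrightarrow> (\<exists>a b. 0 \<le> a \<and> a \<le> b \<and> b \<le> 1 \<and> I = {a..b})"

definition forecasting_system :: "(bstr \<Rightarrow> real set) \<Rightarrow> bool" where
  "forecasting_system \<phi> \<longleftrightarrow> (\<forall>s. is_forecast_interval (\<phi> s))"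

definition upper_exp :: "real set \<Rightarrow> (bool \<Rightarrow> real) \<Rightarrow> real" where
  "upper_exp I f = (SUP p\<in>I. p * f True + (1 - p) * f False)"

definition supermartingale :: "(bstr \<Rightarrow> real set) \<Rightarrow> (bstr \<Rightarrow> real) \<Rightarrow> bool" where
  "supermartingale \<phi> M \<longleftrightarrow> (\<forall>s. upper_exp (\<phi> s) (\<lambda>x. M (s @ [x])) \<le> M s)"

definition test_supermartingale :: "(bstr \<Rightarrow> real set) \<Rightarrow> (bstr \<Rightarrow> real) \<Rightarrow> bool" where
  "test_supermartingale \<phi> M \<longleftrightarrow> supermartingale \<phi> M \<and> (\<forall>s. 0 \<le> M s) \<and> M [] = 1"

definition growth_function :: "(nat \<Rightarrow> nat) \<Rightarrow> bool" where
  "growth_function \<rho> \<longleftrightarrow> recursive_nat_fun \<rho> \<and> mono \<rho> \<and> (\<forall>B. \<exists>n. B < \<rho> n)"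

text \<open>omega^n: the first n entries of omega (outcomes indexed from 0).\<close>
definition prefix :: "(nat \<Rightarrow> bool) \<Rightarrow> nat \<Rightarrow> bstr" where
  "prefix \<omega> n = map \<omega> [0..<n]"

definition schnorr_random :: "(bstr \<Rightarrow> real set) \<Rightarrow> (nat \<Rightarrow> bool) \<Rightarrow> bool" where
  "schnorr_random \<phi> \<omega> \<longleftrightarrow>
     (\<forall>T \<rho>. computable_real_map T \<and> test_supermartingale \<phi> T \<and> growth_function \<rho> \<longrightarrow>
        limsup (\<lambda>n. ereal (T (prefix \<omega> n) - real (\<rho> n))) \<le> 0)"

end

theory Submission
  imports Defs
begin
lemma r_proj: "i < n \<Longrightarrow> recfn n (\<lambda>xs. xs ! i)"
  by (rule recfn.proj)

lemma r_comp1: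
  assumes "recfn 1 (\<lambda>xs. H (xs!0))" "recfn n f"
  shows "recfn n (\<lambda>xs. H (f xs))"
proof -
  have "recfn n (\<lambda>xs. (\<lambda>xs. H (xs!0)) (map (\<lambda>g. g xs) [f]))"
    by (rule recfn.comp[OF assms(1)]) (use assms(2) in auto)
  then show ?thesis by simp
qed

lemma r_comp2:
  assumes "recfn 2 (\<lambda>xs. H (xs!0) (xs!1))" "recfn n f" "recfn n g"
  shows "recfn n (\<lambda>xs. H (f xs) (g xs))"
proof -
  have "recfn n (\<lambda>xs. (\<lambda>xs. H (xs!0) (xs!1)) (map (\<lambda>g. g xs) [f, g]))"
    by (rule recfn.comp[OF assms(1)]) (use assms(2,3) in auto)
  then show ?thesis by simp
qed

lemma r_app1:
  assumes "recfn 1 h" "recfn n f"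
  shows "recfn n (\<lambda>xs. h [f xs])"
proof -
  have "recfn n (\<lambda>xs. h (map (\<lambda>g. g xs) [f]))"
    by (rule recfn.comp[OF assms(1)]) (use assms(2) in auto)
  then show ?thesis by simp
qed

lemma r_app2:
  assumes "recfn 2 h" "recfn n f" "recfn n g"
  shows "recfn n (\<lambda>xs. h [f xs, g xs])"
proof -
  have "recfn n (\<lambda>xs. h (map (\<lambda>g. g xs) [f, g]))"
    by (rule recfn.comp[OF assms(1)]) (use assms(2,3) in auto)
  then show ?thesis by simp
qed

lemma r_suc: "recfn n f \<Longrightarrow> recfn n (\<lambda>xs. Suc (f xs))"
  using r_app1[OF recfn.succ, of n f] by simp

lemma r_const: "recfn n (\<lambda>_. c)"
proof (induction c)
  case 0 then show ?case by (rule recfn.zero)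
next
  case (Suc c) then show ?case using r_suc[OF Suc] by simp
qed

lemma r_prim1:
  assumes B: "recfn 1 (\<lambda>xs. B (xs!0))" and S: "recfn 3 (\<lambda>xs. S (xs!0) (xs!1) (xs!2))"
    and F0: "\<And>y. F 0 y = B y" and FS: "\<And>k y. F (Suc k) y = S k (F k y) y"
  shows "recfn 2 (\<lambda>xs. F (xs!0) (xs!1))"
proof -
  let ?f = "\<lambda>xs::nat list. B (xs!0)" and ?g = "\<lambda>xs::nat list. S (xs!0) (xs!1) (xs!2)"
  have p: "recfn 2 (prec_fn ?f ?g)" using recfn.prim_rec[OF B, of ?g] S by (simp add: numeral_eq_Suc)
  have e: "prec ?f ?g x [y] = F x y" for x y
    by (induction x) (simp_all add: F0 FS)
  have "recfn 2 (\<lambda>xs. prec_fn ?f ?g [xs!0, xs!1])"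
    by (rule r_app2[OF p]) (auto intro!: r_proj)
  then show ?thesis by (simp only: prec_fn_def list.case e)
qed

lemma r_prim0:
  assumes S: "recfn 2 (\<lambda>xs. S (xs!0) (xs!1))"
    and F0: "F 0 = b" and FS: "\<And>k. F (Suc k) = S k (F k)"
  shows "recfn 1 (\<lambda>xs. F (xs!0))"
proof -
  have S3: "recfn 3 (\<lambda>xs. S (xs!0) (xs!1))"
    by (rule r_comp2[OF S]) (auto intro!: r_proj)
  have "recfn 2 (\<lambda>xs. (\<lambda>x y. F x) (xs!0) (xs!1))"
    by (rule r_prim1[where B="\<lambda>_. b" and S="\<lambda>k r y. S k r"]) (use S3 in \<open>auto intro!: r_const simp: F0 FS\<close>)
  then have "recfn 1 (\<lambda>xs. (\<lambda>x y. F x) (xs!0) (xs!0))"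
    by (rule r_comp2) (auto intro!: r_proj)
  then show ?thesis by simp
qed

lemma r_minim:
  assumes H: "recfn 2 (\<lambda>xs. H (xs!0) (xs!1))" and ex: "\<And>x. \<exists>y. H y x = 0"
  shows "recfn 1 (\<lambda>xs. LEAST y. H y (xs!0) = 0)"
proof -
  have "recfn 1 (\<lambda>xs. LEAST y. (\<lambda>xs. H (xs!0) (xs!1)) (y # xs) = 0)"
    by (rule recfn.minim) (use H ex in \<open>auto simp: numeral_eq_Suc\<close>)
  then show ?thesis by simp
qed

lemma r_add2: "recfn 2 (\<lambda>xs. xs!0 + xs!1)"
  by (rule r_prim1[where B="\<lambda>y. y" and S="\<lambda>k r y. Suc r"]) (auto intro!: r_proj r_suc)

lemma r_add: "recfn n f \<Longrightarrow> recfn n g \<Longrightarrow> recfn n (\<lambda>xs. f xs + g xs)"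
  by (rule r_comp2[OF r_add2])

lemma r_mult2: "recfn 2 (\<lambda>xs. xs!0 * xs!1)"
  by (rule r_prim1[where B="\<lambda>y. 0" and S="\<lambda>k r y. r + y"]) (auto intro!: r_proj r_add r_const)

lemma r_mult: "recfn n f \<Longrightarrow> recfn n g \<Longrightarrow> recfn n (\<lambda>xs. f xs * g xs)"
  by (rule r_comp2[OF r_mult2])

lemma r_pred1: "recfn 1 (\<lambda>xs. xs!0 - 1)"
  by (rule r_prim0[where S="\<lambda>k r. k" and b=0]) (auto intro!: r_proj)

lemma r_pred: "recfn n f \<Longrightarrow> recfn n (\<lambda>xs. f xs - 1)"
  using r_comp1[OF r_pred1] by fastforce

lemma r_sub2: "recfn 2 (\<lambda>xs. xs!1 - xs!0)"
proof -
  have "recfn 2 (\<lambda>xs. (\<lambda>x y. y - x) (xs!0) (xs!1))"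
    by (rule r_prim1[where B="\<lambda>y. y" and S="\<lambda>k r y. r - 1"])
       (rule r_proj, simp, rule r_pred, rule r_proj, simp_all)
  then show ?thesis by simp
qed

lemma r_sub: "recfn n f \<Longrightarrow> recfn n g \<Longrightarrow> recfn n (\<lambda>xs. f xs - g xs)"
  using r_comp2[OF r_sub2, of n g f] by simp

lemma r_pow2: "recfn n f \<Longrightarrow> recfn n (\<lambda>xs. 2 ^ f xs)"
proof -
  have "recfn 1 (\<lambda>xs. (\<lambda>x. (2::nat) ^ x) (xs!0))"
    by (rule r_prim0[where S="\<lambda>k r. r + r" and b=1]) (auto intro!: r_proj r_add)
  then show "recfn n f \<Longrightarrow> recfn n (\<lambda>xs. 2 ^ f xs)" using r_comp1 by fastforce
qed

lemma r_tri: "recfn n f \<Longrightarrow> recfn n (\<lambda>xs. triangle (f xs))"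
proof -
  have "recfn 1 (\<lambda>xs. triangle (xs!0))"
    by (rule r_prim0[where S="\<lambda>k r. r + Suc k" and b=0]) (auto intro!: r_proj r_add r_suc)
  then show "recfn n f \<Longrightarrow> recfn n (\<lambda>xs. triangle (f xs))" using r_comp1 by fastforce
qed

lemma r_mod2: "recfn n f \<Longrightarrow> recfn n (\<lambda>xs. f xs mod 2)"
proof -
  have "recfn 1 (\<lambda>xs. (\<lambda>x. x mod (2::nat)) (xs!0))"
    by (rule r_prim0[where S="\<lambda>k r. 1 - r" and b=0]) (auto intro!: r_proj r_sub r_const simp: mod_Suc)
  then show "recfn n f \<Longrightarrow> recfn n (\<lambda>xs. f xs mod 2)" using r_comp1 by fastforce
qed

lemma r_div2: "recfn n f \<Longrightarrow> recfn n (\<lambda>xs. f xs div 2)"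
proof -
  have "recfn 1 (\<lambda>xs. (\<lambda>x. x div (2::nat)) (xs!0))"
    by (rule r_prim0[where S="\<lambda>k r. r + k mod 2" and b=0]) (auto intro!: r_proj r_add r_mod2 simp del: One_nat_def, presburger)
  then show "recfn n f \<Longrightarrow> recfn n (\<lambda>xs. f xs div 2)" using r_comp1 by fastforce
qed

definition pw :: "nat \<Rightarrow> nat" where "pw n = (LEAST y. Suc n - triangle (Suc y) = 0)"
definition pf :: "nat \<Rightarrow> nat" where "pf n = n - triangle (pw n)"
definition ps :: "nat \<Rightarrow> nat" where "ps n = pw n - pf n"

lemma r_pw: "recfn n f \<Longrightarrow> recfn n (\<lambda>xs. pw (f xs))"
proof -
  have "recfn 1 (\<lambda>xs. LEAST y. (\<lambda>y x. Suc x - triangle (Suc y)) y (xs!0) = 0)"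
  proof (rule r_minim)
    show "recfn 2 (\<lambda>xs. Suc (xs ! 1) - triangle (Suc (xs ! 0)))"
      by (intro r_sub r_suc r_tri r_proj) simp_all
    show "\<exists>y. Suc x - triangle (Suc y) = 0" for x
      by (rule exI[of _ x]) (induction x, auto)
  qed
  then have "recfn 1 (\<lambda>xs. pw (xs!0))" by (simp add: pw_def)
  then show "recfn n f \<Longrightarrow> recfn n (\<lambda>xs. pw (f xs))" using r_comp1 by fastforce
qed

lemma r_pf: "recfn n f \<Longrightarrow> recfn n (\<lambda>xs. pf (f xs))"
  unfolding pf_def by (intro r_sub r_tri r_pw)

lemma r_ps: "recfn n f \<Longrightarrow> recfn n (\<lambda>xs. ps (f xs))"
  unfolding ps_def by (intro r_sub r_pf r_pw)

lemma prod_decode_pw: "prod_decode n = (pf n, ps n)"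
proof -
  define w where "w = pw n"
  have ex: "\<exists>y. Suc n - triangle (Suc y) = 0"
    by (rule exI[of _ n]) (induction n, auto)
  have w1: "Suc n \<le> triangle (Suc w)"
    using LeastI_ex[OF ex] unfolding w_def pw_def by simp
  have w2: "triangle w \<le> n"
  proof (cases w)
    case 0 then show ?thesis by simp
  next
    case (Suc v)
    have "v < w" using Suc by simp
    then have "\<not> (Suc n - triangle (Suc v) = 0)"
      unfolding w_def pw_def by (rule not_less_Least)
    then show ?thesis using Suc by simp
  qed
  have "pf n \<le> w" using w1 w2 unfolding pf_def w_def[symmetric] by simp
  then have "prod_encode (pf n, ps n) = n"
    using w2 unfolding prod_encode_def ps_def pf_def w_def[symmetric] by simp
  then show ?thesis by (metis prod_encode_inverse)
qed

definition numf :: "nat \<Rightarrow> nat \<Rightarrow> nat \<Rightarrow> nat" where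
  "numf a b P = (1 - a mod 2) * ((a div 2) * P + 3 * Suc b) + (a mod 2) * (3 * Suc b - Suc (a div 2) * P)"

lemma r_numf: "recfn n f \<Longrightarrow> recfn n g \<Longrightarrow> recfn n h \<Longrightarrow> recfn n (\<lambda>xs. numf (f xs) (g xs) (h xs))"
  unfolding numf_def by (intro r_add r_mult r_sub r_const r_mod2 r_div2 r_suc)

lemma int_decode_cases:
  "int_decode a = (if even a then int (a div 2) else - int (a div 2) - 1)"
  by (simp add: int_decode_def sum_decode_def)

lemma int_decode_double: "int_decode (2 * x) = int x"
  by (simp add: int_decode_def sum_decode_def)

lemma numf_correct:
  assumes "0 < int_decode a * int P + 3 * int (Suc b)"
  shows "int (numf a b P) = int_decode a * int P + 3 * int (Suc b)"
proof (cases "even a")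
  case True
  then show ?thesis by (simp add: numf_def int_decode_cases)
next
  case False
  then have m: "a mod 2 = 1" by presburger
  have "Suc (a div 2) * P < 3 * Suc b"
  proof -
    have "int (Suc (a div 2) * P) < int (3 * Suc b)" using assms False by (simp add: int_decode_cases algebra_simps)
    then show ?thesis by linarith
  qed
  then show ?thesis using False m by (simp add: numf_def int_decode_cases of_nat_diff algebra_simps)
qed

lemma str_code_snoc: "str_code s + 1 \<le> str_code (s @ [x])"
  by (induction s) auto

lemma upper_exp_le:
  assumes "is_forecast_interval I" "\<And>p. p \<in> I \<Longrightarrow> p * f True + (1 - p) * f False \<le> M"
  shows "upper_exp I f \<le> M"
proof -
  from assms(1) obtain a b where "0 \<le> a" "a \<le> b" "b \<le> 1" "I = {a..b}" unfolding is_forecast_interval_def by auto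
  then have "I \<noteq> {}" by auto
  then show ?thesis unfolding upper_exp_def by (rule cSUP_least) (rule assms(2))
qed

lemma upper_exp_ge:
  assumes "is_forecast_interval I" "p \<in> I"
  shows "p * f True + (1 - p) * f False \<le> upper_exp I f"
proof -
  from assms(1) obtain a b where ab: "0 \<le> a" "a \<le> b" "b \<le> 1" "I = {a..b}" unfolding is_forecast_interval_def by auto
  have "bdd_above ((\<lambda>p. p * f True + (1 - p) * f False) ` I)"
  proof (rule bdd_aboveI2)
    fix p assume "p \<in> I"
    then have p: "0 \<le> p" "p \<le> 1" using ab by auto
    have "p * f True \<le> p * \<bar>f True\<bar>" using p by (intro mult_left_mono) auto
    also have "\<dots> \<le> \<bar>f True\<bar>" using p by (simp add: mult_left_le_one_le)
    finally have 1: "p * f True \<le> \<bar>f True\<bar>" .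
    have "(1-p) * f False \<le> (1-p) * \<bar>f False\<bar>" using p by (intro mult_left_mono) auto
    also have "\<dots> \<le> \<bar>f False\<bar>" using p by (simp add: mult_left_le_one_le)
    finally have 2: "(1-p) * f False \<le> \<bar>f False\<bar>" .
    show "p * f True + (1 - p) * f False \<le> \<bar>f True\<bar> + \<bar>f False\<bar>" using 1 2 by simp
  qed
  then show ?thesis unfolding upper_exp_def by (rule cSUP_upper[OF assms(2)])
qed

lemma construct:
  assumes fs: "forecasting_system \<phi>" and comp: "computable_real_map T"
    and ts: "test_supermartingale \<phi> T"
  shows "\<exists>R. recursive_rat_process R \<and> (\<forall>s. 0 < R s) \<and>
     test_supermartingale \<phi> (\<lambda>s. real_of_rat (R s)) \<and> (\<forall>s. T s / 2 \<le> real_of_rat (R s))"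
proof -
  obtain q where rq: "recursive_rat_map2 q" and apx: "\<And>s N. \<bar>T s - real_of_rat (q s N)\<bar> \<le> (1/2) ^ N"
    using comp unfolding computable_real_map_def by blast
  obtain g2 where g2: "recfn 2 g2" and qg: "\<And>s N. q s N = rat_decode (g2 [str_code s, N])"
    using rq unfolding recursive_rat_map2_def by blast
  have Tnn: "\<And>s. 0 \<le> T s" and T0: "T [] = 1" and Tsm: "supermartingale \<phi> T"
    using ts unfolding test_supermartingale_def by auto
  define N where "N s = str_code s + 2" for s
  define R0 where "R0 s = q s (N s) + 3 * (1/2) ^ N s" for s
  have R0r: "real_of_rat (R0 s) = real_of_rat (q s (N s)) + 3 * (1/2) ^ N s" for s
    by (simp add: R0_def of_rat_add of_rat_mult of_rat_power of_rat_divide)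
  have lo: "T s + 2 * (1/2) ^ N s \<le> real_of_rat (R0 s)" for s
    using apx[of s "N s"] unfolding R0r by linarith
  have hi: "real_of_rat (R0 s) \<le> T s + 4 * (1/2) ^ N s" for s
    using apx[of s "N s"] unfolding R0r by linarith
  have R0pos: "0 < R0 s" for s
  proof -
    have "0 < T s + 2 * (1/2::real) ^ N s" using Tnn[of s] by (simp add: add_nonneg_pos)
    then have "0 < real_of_rat (R0 s)" using lo[of s] by linarith
    then show ?thesis by simp
  qed
  define c where "c = R0 []"
  have cpos: "0 < c" using R0pos by (simp add: c_def)
  have c2: "real_of_rat c \<le> 2" using hi[of "[]"] by (simp add: c_def N_def T0)
  have cpos': "0 < real_of_rat c" using cpos by simp
  define R where "R s = R0 s / c" for s
  have Rr: "real_of_rat (R s) = real_of_rat (R0 s) / real_of_rat c" for s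
    by (simp add: R_def of_rat_divide)
  have Rpos: "\<forall>s. 0 < R s" using R0pos cpos by (simp add: R_def)
  have R1: "R [] = 1" using cpos by (simp add: R_def c_def)
  have half: "T s / 2 \<le> real_of_rat (R s)" for s
  proof -
    have "T s / 2 \<le> T s / real_of_rat c" using Tnn[of s] cpos' c2 by (intro divide_left_mono) auto
    also have "\<dots> \<le> real_of_rat (R0 s) / real_of_rat c"
      using lo[of s] cpos' by (intro divide_right_mono) (auto intro: order_trans[rotated])
    finally show ?thesis by (simp add: Rr)
  qed
  have sm: "supermartingale \<phi> (\<lambda>s. real_of_rat (R s))"
    unfolding supermartingale_def
  proof
    fix s
    let ?h = "(1/2::real) ^ N s"
    have I: "is_forecast_interval (\<phi> s)" using fs unfolding forecasting_system_def by blast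
    have ch: "real_of_rat (R0 (s @ [x])) \<le> T (s @ [x]) + 2 * ?h" for x
    proof -
      have "N s + 1 \<le> N (s @ [x])" using str_code_snoc[of s x] by (simp add: N_def)
      then have "(1/2::real) ^ N (s @ [x]) \<le> (1/2) ^ (N s + 1)" by (intro power_decreasing) auto
      then show ?thesis using hi[of "s @ [x]"] by simp
    qed
    show "upper_exp (\<phi> s) (\<lambda>x. real_of_rat (R (s @ [x]))) \<le> real_of_rat (R s)"
    proof (rule upper_exp_le[OF I])
      fix p assume p: "p \<in> \<phi> s"
      then have p01: "0 \<le> p" "p \<le> 1" using I unfolding is_forecast_interval_def by auto
      have "p * T (s @ [True]) + (1 - p) * T (s @ [False]) \<le> upper_exp (\<phi> s) (\<lambda>x. T (s @ [x]))"
        by (rule upper_exp_ge[OF I p])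
      also have "\<dots> \<le> T s" using Tsm unfolding supermartingale_def by blast
      finally have A: "p * T (s @ [True]) + (1 - p) * T (s @ [False]) \<le> T s" .
      have B: "p * real_of_rat (R0 (s @ [True])) + (1 - p) * real_of_rat (R0 (s @ [False]))
          \<le> p * (T (s @ [True]) + 2 * ?h) + (1 - p) * (T (s @ [False]) + 2 * ?h)"
        using p01 ch by (intro add_mono mult_left_mono) auto
      have "p * real_of_rat (R0 (s @ [True])) + (1 - p) * real_of_rat (R0 (s @ [False])) \<le> real_of_rat (R0 s)"
        using A B lo[of s] by (simp add: algebra_simps)
      then have "(p * real_of_rat (R0 (s @ [True])) + (1 - p) * real_of_rat (R0 (s @ [False]))) / real_of_rat c
          \<le> real_of_rat (R0 s) / real_of_rat c"
        using cpos' by (intro divide_right_mono) auto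
      then show "p * real_of_rat (R (s @ [True])) + (1 - p) * real_of_rat (R (s @ [False])) \<le> real_of_rat (R s)"
        by (simp add: Rr add_divide_distrib)
    qed
  qed
  have tsR: "test_supermartingale \<phi> (\<lambda>s. real_of_rat (R s))"
    unfolding test_supermartingale_def using sm Rpos R1 by (auto intro: less_imp_le)
  have recR: "recursive_rat_process R"
  proof -
    obtain pp qq where pq: "quotient_of c = (pp, qq)" by (cases "quotient_of c")
    have cq: "c = of_int pp / of_int qq" by (rule quotient_of_div[OF pq])
    have qq0: "0 < qq" by (rule quotient_of_denom_pos[OF pq])
    have pp0: "0 < pp" using cpos qq0 unfolding cq by (simp add: zero_less_divide_iff)
    define cn where "cn = nat pp"
    define cd where "cd = nat qq"
    have cnd: "c = of_nat cn / of_nat cd" "0 < cn" "0 < cd"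
      using cq pp0 qq0 by (auto simp: cn_def cd_def)
    define G where "G m = triangle (2 * numf (pf (g2 [m, m+2])) (ps (g2 [m, m+2])) (2^(m+2)) * cd
        + (Suc (ps (g2 [m, m+2])) * 2^(m+2) * cn - 1))
        + 2 * numf (pf (g2 [m, m+2])) (ps (g2 [m, m+2])) (2^(m+2)) * cd" for m
    have recG: "recfn 1 (\<lambda>xs. G (xs!0))"
      unfolding G_def
      by (intro r_add r_mult r_tri r_numf r_pf r_ps r_app2[OF g2] r_pow2 r_proj r_const r_suc r_sub) simp_all
    have eq: "R s = rat_decode (G (str_code s))" for s
    proof -
      define m where "m = str_code s"
      define r where "r = g2 [m, m+2]"
      define a where "a = pf r"
      define b where "b = ps r"
      define P where "P = (2::nat)^(m+2)"
      have P0: "0 < P" by (simp add: P_def)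
      have Ns: "N s = m + 2" by (simp add: N_def m_def)
      have qs: "q s (N s) = of_int (int_decode a) / of_nat (Suc b)"
      proof -
        have "q s (N s) = rat_decode r" by (simp only: qg Ns m_def r_def)
        then show ?thesis by (simp add: rat_decode_def prod_decode_pw a_def b_def)
      qed
      have hp: "(1/2::rat) ^ N s = 1 / of_nat P"
        by (simp add: Ns P_def power_one_over)
      define X where "X = int_decode a * int P + 3 * int (Suc b)"
      have R0X: "R0 s = of_int X / of_nat (Suc b * P)"
        using P0 unfolding R0_def qs hp by (simp add: X_def field_simps)
      have "0 < X"
      proof -
        have "0 < (of_int X :: rat) / of_nat (Suc b * P)" using R0pos[of s] R0X by simp
        moreover have d: "(0::rat) < of_nat (Suc b * P)" using P0 by (simp del: of_nat_mult)
        ultimately have "(0::rat) < (of_int X / of_nat (Suc b * P)) * of_nat (Suc b * P)"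
          by (intro mult_pos_pos)
        then have "(0::rat) < of_int X" using d by simp
        then show ?thesis by simp
      qed
      then have num: "int (numf a b P) = X" unfolding X_def by (rule numf_correct)
      have Gm: "G m = prod_encode (2 * (numf a b P * cd), Suc b * P * cn - 1)"
        unfolding G_def prod_encode_def r_def[symmetric] a_def[symmetric] b_def[symmetric] P_def[symmetric]
        by (simp add: mult.assoc)
      have pos: "0 < Suc b * P * cn" using P0 cnd by simp
      have "rat_decode (G m) = of_int (int (numf a b P * cd)) / of_nat (Suc b * P * cn)"
      proof -
        have sp: "Suc (Suc b * P * cn - 1) = Suc b * P * cn" using pos by simp
        show ?thesis unfolding Gm rat_decode_def
          by (simp only: prod_encode_inverse prod.case sp int_decode_double)
      qed
      also have "\<dots> = of_int X * of_nat cd / (of_nat (Suc b * P) * of_nat cn)"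
        by (simp add: num[symmetric])
      also have "\<dots> = R s"
        using cnd(2,3) P0 unfolding R_def R0X cnd(1) by (simp add: field_simps)
      finally show ?thesis by (simp add: m_def)
    qed
    show ?thesis unfolding recursive_rat_process_def using recG eq by auto
  qed
  show ?thesis using recR Rpos tsR half by blast
qed

theorem proposition4p4:
  fixes \<phi> :: "bool list \<Rightarrow> real set" and \<omega> :: "nat \<Rightarrow> bool"
  assumes "forecasting_system \<phi>"
  shows "schnorr_random \<phi> \<omega> \<longleftrightarrow>
    \<not> (\<exists>R \<rho>. recursive_rat_process R \<and> (\<forall>s. 0 < R s) \<and>
          test_supermartingale \<phi> (\<lambda>s. real_of_rat (R s)) \<and> growth_function \<rho> \<and>
          limsup (\<lambda>n. ereal (real_of_rat (R (prefix \<omega> n)) - real (\<rho> n))) > 0)"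
proof
  assume sr: "schnorr_random \<phi> \<omega>"
  show "\<not> (\<exists>R \<rho>. recursive_rat_process R \<and> (\<forall>s. 0 < R s) \<and>
          test_supermartingale \<phi> (\<lambda>s. real_of_rat (R s)) \<and> growth_function \<rho> \<and>
          limsup (\<lambda>n. ereal (real_of_rat (R (prefix \<omega> n)) - real (\<rho> n))) > 0)"
  proof
    assume "\<exists>R \<rho>. recursive_rat_process R \<and> (\<forall>s. 0 < R s) \<and>
          test_supermartingale \<phi> (\<lambda>s. real_of_rat (R s)) \<and> growth_function \<rho> \<and>
          limsup (\<lambda>n. ereal (real_of_rat (R (prefix \<omega> n)) - real (\<rho> n))) > 0"
    then obtain R \<rho> where rR: "recursive_rat_process R" and tR: "test_supermartingale \<phi> (\<lambda>s. real_of_rat (R s))"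
      and gr: "growth_function \<rho>" and ls: "limsup (\<lambda>n. ereal (real_of_rat (R (prefix \<omega> n)) - real (\<rho> n))) > 0"
      by blast
    obtain g where g: "recfn 1 g" and Rg: "\<And>s. R s = rat_decode (g [str_code s])"
      using rR unfolding recursive_rat_process_def by blast
    have "recfn 2 (\<lambda>xs. g [xs!0])" by (intro r_app1[OF g] r_proj) simp
    then have "recursive_rat_map2 (\<lambda>s N. R s)"
      unfolding recursive_rat_map2_def using Rg by auto
    then have "computable_real_map (\<lambda>s. real_of_rat (R s))"
      unfolding computable_real_map_def by (intro exI[of _ "\<lambda>s N. R s"]) auto
    then have "limsup (\<lambda>n. ereal (real_of_rat (R (prefix \<omega> n)) - real (\<rho> n))) \<le> 0"
      using sr tR gr unfolding schnorr_random_def by blast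
    then show False using ls by simp
  qed
next
  assume nex: "\<not> (\<exists>R \<rho>. recursive_rat_process R \<and> (\<forall>s. 0 < R s) \<and>
          test_supermartingale \<phi> (\<lambda>s. real_of_rat (R s)) \<and> growth_function \<rho> \<and>
          limsup (\<lambda>n. ereal (real_of_rat (R (prefix \<omega> n)) - real (\<rho> n))) > 0)"
  show "schnorr_random \<phi> \<omega>"
    unfolding schnorr_random_def
  proof (intro allI impI)
    fix T \<rho> assume a: "computable_real_map T \<and> test_supermartingale \<phi> T \<and> growth_function \<rho>"
    show "limsup (\<lambda>n. ereal (T (prefix \<omega> n) - real (\<rho> n))) \<le> 0"
    proof (rule ccontr)
      assume "\<not> ?thesis"
      then have ls: "0 < limsup (\<lambda>n. ereal (T (prefix \<omega> n) - real (\<rho> n)))" by simp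
      obtain R where rR: "recursive_rat_process R" and Rpos: "\<forall>s. 0 < R s"
        and tR: "test_supermartingale \<phi> (\<lambda>s. real_of_rat (R s))" and half: "\<forall>s. T s / 2 \<le> real_of_rat (R s)"
        using construct[OF assms] a by blast
      define \<rho>' where "\<rho>' n = \<rho> n div 2" for n
      have gr': "growth_function \<rho>'"
      proof -
        obtain g where g: "recfn 1 g" and \<rho>g: "\<And>n. \<rho> n = g [n]"
          using a unfolding growth_function_def recursive_nat_fun_def by blast
        have "recfn 1 (\<lambda>xs. g [xs!0] div 2)" by (intro r_div2 r_app1[OF g] r_proj) simp
        then have "recursive_nat_fun \<rho>'" unfolding recursive_nat_fun_def \<rho>'_def using \<rho>g by auto
        moreover have "mono \<rho>'"
          using a unfolding growth_function_def \<rho>'_def by (auto intro!: monoI div_le_mono dest: monoD)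
        moreover have "\<exists>n. B < \<rho>' n" for B
        proof -
          obtain n where "2 * B + 1 < \<rho> n" using a unfolding growth_function_def by blast
          then show ?thesis unfolding \<rho>'_def by (intro exI[of _ n]) linarith
        qed
        ultimately show ?thesis unfolding growth_function_def by blast
      qed
      have le: "ereal (T (prefix \<omega> n) - real (\<rho> n)) * ereal (1/2)
          \<le> ereal (real_of_rat (R (prefix \<omega> n)) - real (\<rho>' n))" for n
      proof -
        have "real (\<rho>' n) \<le> real (\<rho> n) / 2" unfolding \<rho>'_def by linarith
        moreover have "T (prefix \<omega> n) / 2 \<le> real_of_rat (R (prefix \<omega> n))" using half by blast
        moreover have "(T (prefix \<omega> n) - real (\<rho> n)) / 2 = T (prefix \<omega> n) / 2 - real (\<rho> n) / 2"
          by (simp add: diff_divide_distrib)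
        ultimately have "(T (prefix \<omega> n) - real (\<rho> n)) / 2 \<le> real_of_rat (R (prefix \<omega> n)) - real (\<rho>' n)"
          by linarith
        then show ?thesis by simp
      qed
      have "0 < limsup (\<lambda>n. ereal (T (prefix \<omega> n) - real (\<rho> n))) * ereal (1/2)"
        using ls by (cases "limsup (\<lambda>n. ereal (T (prefix \<omega> n) - real (\<rho> n)))") auto
      also have "\<dots> = limsup (\<lambda>n. ereal (T (prefix \<omega> n) - real (\<rho> n)) * ereal (1/2))"
        by (rule limsup_ereal_mult_right[symmetric]) simp
      also have "\<dots> \<le> limsup (\<lambda>n. ereal (real_of_rat (R (prefix \<omega> n)) - real (\<rho>' n)))"
        by (rule Limsup_mono) (use le in auto)
      finally show False using nex rR Rpos tR gr' by blast
    qed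
  qed
qed

end
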